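(* Let $(\hat{x}_i,\hat{a}_i,\hat{y}_i)$, $i=1,\dots,N$, be samples in $\mathbb{R}^n\times\{0,1\}\times\mathbb{R}$ with empirical distribution $\hat{\mathbb{P}}^N$ and empirical marginals $\hat{p}^N_a=\frac1N\#\{i:\hat{a}_i=a\}>0$. Let $\mathcal{R}(x)=\rho^Tx+\sigma$ with $\rho\in\mathbb{R}^n\setminus\{0\}$, $\sigma\in\mathbb{R}$, let $d(y,\hat{y})=\hat{y}$, and let $\lambda(a)=(\hat{p}^N_1)^{-1}\mathbb{1}_{a=1}-(\hat{p}^N_0)^{-1}\mathbb{1}_{a=0}$, so that $\phi(x,a,y)=\lambda(a)\mathcal{R}(x)$. Let $\alpha=1$, $\beta\ge0$, $c((x,a,y),(x',a',y'))=\|x-x'\|+\infty\cdot|a-a'|+\beta|y-y'|$ (with $\infty\cdot 0=0$), $W_c^2(\mathbb{P},\mathbb{Q})=\inf_{\pi\in\Pi(\mathbb{P},\mathbb{Q})}\mathbb{E}_\pi[c^2]$, and $$\mathcal{T}=\inf\Big\{W_c^2(\hat{\mathbb{P}}^N,\mathbb{Q}):\ \mathbb{E}_{\mathbb{Q}}[\phi(X,A,Y)]=0,\ \mathbb{Q}(A=a)=\hat{p}^N_a\ \forall a\Big\}.$$ Then $$\mathcal{T}=\frac{\big(\sum_{i=1}^N\lambda(\hat{a}_i)(\rho^T\hat{x}_i+\sigma)\big)^2}{N\|\rho\|^2\sum_{i=1}^N\lambda(\hat{a}_i)^2}.$$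
   Context: $\|\cdot\|$ is the Euclidean norm; $\Pi(\mathbb{P},\mathbb{Q})$ is the set of couplings; the infimum is over probability distributions $\mathbb{Q}$ on $\mathbb{R}^n\times\{0,1\}\times\mathbb{R}$. This is the squared Wasserstein projection onto the set of distributions under which the linear regressor satisfies the equal-mean fairness criterion $\mathbb{E}[\mathcal{R}(X)\mid A=0]=\mathbb{E}[\mathcal{R}(X)\mid A=1]$ (with empirical group weights). *)

theory Defs
  imports "HOL-Probability.Probability"
begin

text \<open>Samples live in R^n x {0,1} x R, modelled as (real^'n) x bool x real
 (True = group 1, False = group 0), with the Borel sigma-algebra (discrete on bool).\<close>

type_synonym ('n) sample = "(real^('n::finite)) \<times> bool \<times> real"

definition couplings :: "'a measure \<Rightarrow> 'b measure \<Rightarrow> ('a \<times> 'b) measure set" where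
  "couplings P Q = {\<pi>. prob_space \<pi> \<and> sets \<pi> = sets (P \<Otimes>\<^sub>M Q) \<and>
       distr \<pi> P fst = P \<and> distr \<pi> Q snd = Q}"

definition cost_sq :: "real \<Rightarrow> ('n::finite) sample \<Rightarrow> ('n::finite) sample \<Rightarrow> ennreal" where
  "cost_sq \<beta> z z' = (case z of (x,a,y) \<Rightarrow> case z' of (x',a',y') \<Rightarrow>
      if a = a' then ennreal ((norm (x - x') + \<beta> * \<bar>y - y'\<bar>)^2) else \<infinity>)"

definition Wc_sq :: "real \<Rightarrow> ('n::finite) sample measure \<Rightarrow> ('n::finite) sample measure \<Rightarrow> ennreal" where
  "Wc_sq \<beta> P Q = (INF \<pi>\<in>couplings P Q. \<integral>\<^sup>+ w. cost_sq \<beta> (fst w) (snd w) \<partial>\<pi>)"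

definition emp_dist :: "nat \<Rightarrow> (nat \<Rightarrow> real^('n::finite)) \<Rightarrow> (nat \<Rightarrow> bool) \<Rightarrow> (nat \<Rightarrow> real)
     \<Rightarrow> ('n::finite) sample measure" where
  "emp_dist N xh ah yh =
     distr (uniform_count_measure {..<N}) borel (\<lambda>i. (xh i, ah i, yh i))"

definition emp_marg :: "nat \<Rightarrow> (nat \<Rightarrow> bool) \<Rightarrow> bool \<Rightarrow> real" where
  "emp_marg N ah a = real (card {i\<in>{..<N}. ah i = a}) / real N"

definition lam :: "nat \<Rightarrow> (nat \<Rightarrow> bool) \<Rightarrow> bool \<Rightarrow> real" where
  "lam N ah a = (if a then 1 / emp_marg N ah True else - (1 / emp_marg N ah False))"

definition phi :: "nat \<Rightarrow> (nat \<Rightarrow> bool) \<Rightarrow> real^('n::finite) \<Rightarrow> real \<Rightarrow> ('n::finite) sample \<Rightarrow> real" where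
  "phi N ah \<rho> \<sigma> z = (case z of (x,a,y) \<Rightarrow> lam N ah a * (\<rho> \<bullet> x + \<sigma>))"

definition proj_T :: "nat \<Rightarrow> (nat \<Rightarrow> real^('n::finite)) \<Rightarrow> (nat \<Rightarrow> bool) \<Rightarrow> (nat \<Rightarrow> real)
     \<Rightarrow> real^('n::finite) \<Rightarrow> real \<Rightarrow> real \<Rightarrow> ennreal" where
  "proj_T N xh ah yh \<rho> \<sigma> \<beta> =
     (INF Q\<in>{Q :: ('n::finite) sample measure. prob_space Q \<and> sets Q = sets borel \<and>
              integrable Q (phi N ah \<rho> \<sigma>) \<and> (\<integral>z. phi N ah \<rho> \<sigma> z \<partial>Q) = 0 \<and>
              (\<forall>a. measure Q {z. fst (snd z) = a} = emp_marg N ah a)}.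
        Wc_sq \<beta> (emp_dist N xh ah yh) Q)"

end

theory Submission
  imports Defs
begin

lemma mA[measurable]: "(\<lambda>z::('n::finite) sample. fst (snd z)) \<in> measurable borel (count_space UNIV)"
proof -
  have "(\<lambda>z::('n::finite) sample. fst (snd z)) \<in> borel_measurable borel"
    by (intro borel_measurable_continuous_onI continuous_intros)
  then show ?thesis using sets_borel_eq_count_space measurable_cong_sets by (metis)
qed
lemma mX[measurable]: "(\<lambda>z::('n::finite) sample. fst z) \<in> borel_measurable borel"
    by (intro borel_measurable_continuous_onI continuous_intros)
lemma mY[measurable]: "(\<lambda>z::('n::finite) sample. snd (snd z)) \<in> borel_measurable borel"
    by (intro borel_measurable_continuous_onI continuous_intros)

lemma cost_meas[measurable]: "(\<lambda>w::('n::finite) sample \<times> ('n::finite) sample. cost_sq b (fst w) (snd w)) \<in> borel_measurable (borel \<Otimes>\<^sub>M borel)"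
  unfolding cost_sq_def
  apply (simp add: case_prod_beta)
  by measurable

lemma phi_alt: "phi N ah \<rho> \<sigma> z = lam N ah (fst (snd z)) * (\<rho> \<bullet> fst z + \<sigma>)"
  by (simp add: phi_def case_prod_beta)

lemma lam_meas[measurable]: "(\<lambda>z::('n::finite) sample. lam N ah (fst (snd z))) \<in> borel_measurable borel"
  by measurable

lemma phi_meas[measurable]: "phi N ah \<rho> \<sigma> \<in> borel_measurable borel"
  unfolding phi_alt[abs_def] by measurable

lemma setA[measurable]: "{z::('n::finite) sample. fst (snd z) = a} \<in> sets borel"
  by measurable

lemma U_meas: "g \<in> measurable (uniform_count_measure A) (borel::'b::topological_space measure)"
  by (simp add: measurable_cong_sets[OF sets_uniform_count_measure_count_space refl])

lemma U_integrable: "finite A \<Longrightarrow> integrable (uniform_count_measure A) (f::_\<Rightarrow>real)"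
  unfolding uniform_count_measure_def by (rule integrable_point_measure_finite)

lemma emp_integrable:
  fixes f :: "'b::topological_space \<Rightarrow> real"
  assumes "f \<in> borel_measurable borel" "finite A"
  shows "integrable (distr (uniform_count_measure A) borel g) f"
  using assms by (simp add: integrable_distr_eq[OF U_meas] U_integrable)

lemma emp_integral:
  fixes f :: "'b::topological_space \<Rightarrow> real"
  assumes "f \<in> borel_measurable borel" "finite A"
  shows "integral\<^sup>L (distr (uniform_count_measure A) borel g) f = (\<Sum>i\<in>A. f (g i)) / card A"
  using assms by (simp add: integral_distr[OF U_meas] integral_uniform_count_measure)

lemma l1: fixes g t k :: real shows "2*t*k*g - t^2*k^2 \<le> g^2"
proof -
  have "0 \<le> (g - t*k)^2" by simp
  then show ?thesis by (simp add: power2_eq_square algebra_simps)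
qed
lemma l2: fixes t r2 k a b s :: real assumes "r2 > 0"
  shows "(2*t/r2)*(k*(a+s)) + (-2*t/r2)*(k*(b+s)) + (- (t^2)/r2)*k^2 = (2*t*k*(a-b) - t^2*k^2)/r2"
  using assms by (simp add: field_simps)

lemma lower_bound:
  fixes P Q :: "('n::finite) sample measure" and \<pi> :: "(('n::finite) sample \<times> ('n::finite) sample) measure"
    and \<rho> :: "real^'n" and h :: "bool \<Rightarrow> real"
  assumes pi: "\<pi> \<in> couplings P Q"
    and sP: "sets P = sets borel" and sQ: "sets Q = sets borel"
    and iP: "\<And>f::('n::finite) sample \<Rightarrow> real. f \<in> borel_measurable borel \<Longrightarrow> integrable P f"
    and iQ: "integrable Q (\<lambda>z. h (fst (snd z)) * (\<rho> \<bullet> fst z + \<sigma>))"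
    and Q0: "(\<integral>z. h (fst (snd z)) * (\<rho> \<bullet> fst z + \<sigma>) \<partial>Q) = 0"
    and P1: "(\<integral>z. h (fst (snd z)) * (\<rho> \<bullet> fst z + \<sigma>) \<partial>P) = s1"
    and P2: "(\<integral>z. (h (fst (snd z)))^2 \<partial>P) = s2"
    and s2: "s2 > 0" and rho: "\<rho> \<noteq> 0" and beta: "\<beta> \<ge> 0"
  shows "ennreal (s1^2 / (s2 * (norm \<rho>)^2)) \<le> (\<integral>\<^sup>+ w. cost_sq \<beta> (fst w) (snd w) \<partial>\<pi>)"
proof -
  have prob: "prob_space \<pi>" and spi: "sets \<pi> = sets (P \<Otimes>\<^sub>M Q)"
    and mP: "distr \<pi> P fst = P" and mQ: "distr \<pi> Q snd = Q"
    using pi by (auto simp: couplings_def)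
  have spi': "sets \<pi> = sets (borel \<Otimes>\<^sub>M borel)"
    using spi sets_pair_measure_cong[OF sP sQ] by (rule trans)
  have mcong: "f \<in> borel_measurable (borel \<Otimes>\<^sub>M borel) \<Longrightarrow> f \<in> borel_measurable \<pi>" for f :: "_ \<Rightarrow> 'c::topological_space"
    using measurable_cong_sets[OF spi' refl] by blast
  have fstm: "fst \<in> measurable \<pi> P"
    using measurable_cong_sets[OF spi' sP] by (metis measurable_fst)
  have sndm: "snd \<in> measurable \<pi> Q"
    using measurable_cong_sets[OF spi' sQ] by (metis measurable_snd)
  let ?C = "\<integral>\<^sup>+ w. cost_sq \<beta> (fst w) (snd w) \<partial>\<pi>"
  show ?thesis
  proof (cases "?C = \<infinity>")
    case True then show ?thesis by simp
  next
    case False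
    define D where "D = {w \<in> space \<pi>. fst (snd (fst w)) \<noteq> fst (snd (snd w))}"
    have Dm: "D \<in> sets \<pi>"
    proof -
      have "{w \<in> space (borel \<Otimes>\<^sub>M borel). fst (snd (fst w)) \<noteq> fst (snd (snd (w::('n sample \<times> 'n sample))))} \<in> sets (borel \<Otimes>\<^sub>M borel)"
        by measurable
      then show ?thesis unfolding D_def using spi' sets_eq_imp_space_eq[OF spi'] by simp
    qed
    have "\<infinity> * emeasure \<pi> D = (\<integral>\<^sup>+ w. \<infinity> * indicator D w \<partial>\<pi>)"
      using Dm by (simp add: nn_integral_cmult_indicator)
    also have "\<dots> \<le> ?C"
      by (intro nn_integral_mono) (auto simp: D_def indicator_def cost_sq_def split: prod.splits)
    finally have le: "\<infinity> * emeasure \<pi> D \<le> ?C" .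
    have "emeasure \<pi> D = 0"
    proof (rule ccontr)
      assume "emeasure \<pi> D \<noteq> 0"
      then have "\<infinity> * emeasure \<pi> D = \<infinity>" by (simp add: ennreal_top_mult)
      with le False show False by (simp add: top_unique)
    qed
    then have nul: "D \<in> null_sets \<pi>" using Dm by (simp add: null_sets_def)
    have AEeq: "AE w in \<pi>. fst (snd (fst w)) = fst (snd (snd w))"
      by (rule AE_I'[OF nul]) (auto simp: D_def)
    define R where "R = (\<lambda>z::('n::finite) sample. h (fst (snd z)) * (\<rho> \<bullet> fst z + \<sigma>))"
    have Rm: "R \<in> borel_measurable borel" unfolding R_def by measurable
    have RmP: "R \<in> borel_measurable P" "R \<in> borel_measurable Q"
      using Rm measurable_cong_sets[OF sP refl] measurable_cong_sets[OF sQ refl] by blast+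
    define H where "H = (\<lambda>z::('n::finite) sample. (h (fst (snd z)))^2)"
    have Hb: "H \<in> borel_measurable borel" unfolding H_def by measurable
    have Hm: "H \<in> borel_measurable P"
      using Hb measurable_cong_sets[OF sP refl] by blast
    define A1 where "A1 = (\<lambda>w::('n sample \<times> 'n sample). h (fst (snd (fst w))) * (\<rho> \<bullet> fst (snd w) + \<sigma>))"
    define A2 where "A2 = (\<lambda>w::('n sample \<times> 'n sample). R (fst w))"
    define A3 where "A3 = (\<lambda>w::('n sample \<times> 'n sample). H (fst w))"
    have iA2: "integrable \<pi> A2" and IA2: "integral\<^sup>L \<pi> A2 = s1"
      using integrable_distr_eq[OF fstm RmP(1)] integral_distr[OF fstm RmP(1)] iP[OF Rm] P1
      unfolding mP A2_def R_def by auto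
    have iA3: "integrable \<pi> A3" and IA3: "integral\<^sup>L \<pi> A3 = s2"
      using integrable_distr_eq[OF fstm Hm] integral_distr[OF fstm Hm] iP[OF Hb] P2
      unfolding mP A3_def H_def by auto
    have iRQ: "integrable \<pi> (\<lambda>w. R (snd w))" and IRQ: "integral\<^sup>L \<pi> (\<lambda>w. R (snd w)) = 0"
      using integrable_distr_eq[OF sndm RmP(2)] integral_distr[OF sndm RmP(2)] iQ Q0
      unfolding mQ R_def by auto
    have A1m: "A1 \<in> borel_measurable \<pi>"
      unfolding A1_def by (intro mcong) measurable
    have RQm: "(\<lambda>w. R (snd w)) \<in> borel_measurable \<pi>"
      unfolding R_def by (intro mcong) measurable
    have AE1: "AE w in \<pi>. R (snd w) = A1 w"
      using AEeq by eventually_elim (simp add: R_def A1_def)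
    have iA1: "integrable \<pi> A1" and IA1: "integral\<^sup>L \<pi> A1 = 0"
      using integrable_cong_AE_imp[OF iRQ A1m AE1] integral_cong_AE[OF RQm A1m AE1] IRQ by auto
    define r2 where "r2 = (norm \<rho>)^2"
    have r2: "r2 > 0" using rho by (simp add: r2_def)
    define t where "t = - s1 / s2"
    define F where "F = (\<lambda>w. (2*t/r2) * A1 w + (- 2*t/r2) * A2 w + (- (t^2)/r2) * A3 w)"
    have iF: "integrable \<pi> F" unfolding F_def using iA1 iA2 iA3 by auto
    have IF: "integral\<^sup>L \<pi> F = s1^2 / (s2 * (norm \<rho>)^2)"
    proof -
      have "integral\<^sup>L \<pi> F = (- 2*t/r2) * s1 + (- (t^2)/r2) * s2"
        unfolding F_def using iA1 iA2 iA3 IA1 IA2 IA3 by simp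
      also have "\<dots> = s1^2 / (s2 * (norm \<rho>)^2)"
        using s2 r2 unfolding t_def r2_def by (simp add: field_simps power2_eq_square)
      finally show ?thesis .
    qed
    have pw: "ennreal (F w) \<le> cost_sq \<beta> (fst w) (snd w)" if eq: "fst (snd (fst w)) = fst (snd (snd w))" for w
    proof -
      obtain x a y x' a' y' where w: "w = ((x,a,y),(x',a',y'))" by (metis prod.collapse)
      have aa: "a = a'" using eq w by simp
      define g where "g = \<rho> \<bullet> (x' - x)"
      define k where "k = h a"
      have "F w = (2*t/r2)*(k*(\<rho> \<bullet> x'+\<sigma>)) + (-2*t/r2)*(k*(\<rho> \<bullet> x+\<sigma>)) + (- (t^2)/r2)*k^2"
        unfolding F_def A1_def A2_def A3_def R_def H_def w k_def by simp
      also have "\<dots> = (2*t*k*g - t^2*k^2)/r2"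
        unfolding g_def inner_diff_right by (rule l2[OF r2])
      finally have Fw: "F w = (2*t*k*g - t^2*k^2)/r2" .
      have "2*t*k*g - t^2*k^2 \<le> g^2" by (rule l1)
      then have "F w \<le> g^2 / r2" using r2 Fw by (simp add: divide_right_mono)
      also have "g^2 \<le> r2 * (norm (x - x'))^2"
      proof -
        have "\<bar>g\<bar> \<le> norm \<rho> * norm (x' - x)" unfolding g_def by (rule Cauchy_Schwarz_ineq2)
        then have "g^2 \<le> (norm \<rho> * norm (x' - x))^2"
          by (metis abs_ge_zero power2_abs power_mono)
        then show ?thesis by (simp add: r2_def power_mult_distrib norm_minus_commute)
      qed
      then have "g^2 / r2 \<le> (norm (x - x'))^2" using r2 by (simp add: divide_le_eq mult.commute)
      also have "\<dots> \<le> (norm (x - x') + \<beta> * \<bar>y - y'\<bar>)^2"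
        using beta by (intro power_mono) auto
      finally show ?thesis unfolding w cost_sq_def using aa by (simp add: ennreal_leI)
    qed
    have "ennreal (integral\<^sup>L \<pi> F) \<le> ennreal (integral\<^sup>L \<pi> (\<lambda>w. max 0 (F w)))"
      using iF by (intro ennreal_leI integral_mono) auto
    also have "\<dots> = (\<integral>\<^sup>+ w. ennreal (max 0 (F w)) \<partial>\<pi>)"
      using iF by (intro nn_integral_eq_integral[symmetric]) auto
    also have "\<dots> = (\<integral>\<^sup>+ w. ennreal (F w) \<partial>\<pi>)"
      by (intro nn_integral_cong) (simp add: max_def ennreal_neg)
    also have "\<dots> \<le> ?C"
      using AEeq by (intro nn_integral_mono_AE) (auto elim!: eventually_mono intro: pw)
    finally show ?thesis using IF by simp
  qed
qed


theorem corollary1: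
  fixes N :: nat and xh :: "nat \<Rightarrow> real^'n" and ah :: "nat \<Rightarrow> bool" and yh :: "nat \<Rightarrow> real"
    and \<rho> :: "real^'n" and \<sigma> \<beta> :: real
  assumes "\<forall>a. emp_marg N ah a > 0"
    and "\<rho> \<noteq> 0"
    and "\<beta> \<ge> 0"
  shows "proj_T N xh ah yh \<rho> \<sigma> \<beta> =
    ennreal ((\<Sum>i<N. lam N ah (ah i) * (\<rho> \<bullet> xh i + \<sigma>))^2 /
       (real N * (norm \<rho>)^2 * (\<Sum>i<N. (lam N ah (ah i))^2)))"
proof -
  define U where "U = uniform_count_measure {..<N}"
  have Npos: "N > 0"
    using assms(1) by (cases "N = 0") (auto simp: emp_marg_def)
  have p1: "emp_marg N ah True > 0" and p0: "emp_marg N ah False > 0" using assms(1) by auto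
  have lam_nz: "lam N ah a \<noteq> 0" for a
    using p1 p0 by (auto simp: lam_def)
  define S where "S = (\<Sum>i<N. lam N ah (ah i) * (\<rho> \<bullet> xh i + \<sigma>))"
  define L where "L = (\<Sum>i<N. (lam N ah (ah i))^2)"
  define r2 where "r2 = (norm \<rho>)^2"
  have r2: "r2 > 0" using assms(2) by (simp add: r2_def)
  have Lpos: "L > 0" unfolding L_def
    using Npos lam_nz by (intro sum_pos) auto
  define z where "z = (\<lambda>i. (xh i, ah i, yh i))"
  have Pdef: "emp_dist N xh ah yh = distr U borel z"
    by (simp add: emp_dist_def U_def z_def)
  have Uprob: "prob_space U" unfolding U_def using Npos by (intro prob_space_uniform_count_measure) auto
  have RHS: "S^2 / (real N * r2 * L) = (S / N)^2 / ((L / N) * (norm \<rho>)^2)"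
    using Npos by (simp add: r2_def power2_eq_square field_simps)
  have lower: "ennreal (S^2 / (real N * r2 * L)) \<le> proj_T N xh ah yh \<rho> \<sigma> \<beta>"
    unfolding proj_T_def
  proof (intro INF_greatest)
    fix Q :: "'n sample measure"
    assume Q: "Q \<in> {Q. prob_space Q \<and> sets Q = sets borel \<and>
              integrable Q (phi N ah \<rho> \<sigma>) \<and> (\<integral>z. phi N ah \<rho> \<sigma> z \<partial>Q) = 0 \<and>
              (\<forall>a. measure Q {z. fst (snd z) = a} = emp_marg N ah a)}"
    show "ennreal (S^2 / (real N * r2 * L)) \<le> Wc_sq \<beta> (emp_dist N xh ah yh) Q"
      unfolding Wc_sq_def
    proof (intro INF_greatest)
      fix \<pi> assume pi: "\<pi> \<in> couplings (emp_dist N xh ah yh) Q"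
      show "ennreal (S^2 / (real N * r2 * L)) \<le> (\<integral>\<^sup>+ w. cost_sq \<beta> (fst w) (snd w) \<partial>\<pi>)"
        unfolding RHS
      proof (rule lower_bound[OF pi, where h = "lam N ah"])
        show "sets (emp_dist N xh ah yh) = sets borel" by (simp add: Pdef)
        show "sets Q = sets borel" using Q by simp
        show "integrable (emp_dist N xh ah yh) f" if "f \<in> borel_measurable borel" for f :: "'n sample \<Rightarrow> real"
          unfolding Pdef U_def using that by (intro emp_integrable) auto
        show "integrable Q (\<lambda>z. lam N ah (fst (snd z)) * (\<rho> \<bullet> fst z + \<sigma>))"
          using Q by (simp add: phi_alt[abs_def])
        show "(\<integral>z. lam N ah (fst (snd z)) * (\<rho> \<bullet> fst z + \<sigma>) \<partial>Q) = 0"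
          using Q by (simp add: phi_alt[abs_def])
        have m: "(\<lambda>z::'n sample. lam N ah (fst (snd z)) * (\<rho> \<bullet> fst z + \<sigma>)) \<in> borel_measurable borel"
          by measurable
        show "(\<integral>z. lam N ah (fst (snd z)) * (\<rho> \<bullet> fst z + \<sigma>) \<partial>emp_dist N xh ah yh) = S / N"
          unfolding Pdef U_def using emp_integral[OF m, of "{..<N}" z] by (simp add: S_def z_def)
        have m2: "(\<lambda>z::'n sample. (lam N ah (fst (snd z)))^2) \<in> borel_measurable borel"
          by measurable
        show "(\<integral>z. (lam N ah (fst (snd z)))^2 \<partial>emp_dist N xh ah yh) = L / N"
          unfolding Pdef U_def using emp_integral[OF m2, of "{..<N}" z] by (simp add: L_def z_def)
        show "L / N > 0" using Lpos Npos by simp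
      qed (use assms in auto)
    qed
  qed
  define c where "c = (\<lambda>a. - lam N ah a * S / (r2 * L))"
  define z' where "z' = (\<lambda>i. (xh i + c (ah i) *\<^sub>R \<rho>, ah i, yh i))"
  define Q0 where "Q0 = distr U borel z'"
  define \<pi>0 where "\<pi>0 = distr U (borel \<Otimes>\<^sub>M borel) (\<lambda>i. (z i, z' i))"
  have fin: "finite {..<N}" by simp
  have Q0feas: "Q0 \<in> {Q. prob_space Q \<and> sets Q = sets borel \<and>
              integrable Q (phi N ah \<rho> \<sigma>) \<and> (\<integral>z. phi N ah \<rho> \<sigma> z \<partial>Q) = 0 \<and>
              (\<forall>a. measure Q {z. fst (snd z) = a} = emp_marg N ah a)}"
  proof (intro CollectI conjI allI)
    show "prob_space Q0" unfolding Q0_def by (intro prob_space.prob_space_distr Uprob) (simp add: U_def U_meas)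
    show "sets Q0 = sets borel" by (simp add: Q0_def)
    show "integrable Q0 (phi N ah \<rho> \<sigma>)" unfolding Q0_def U_def by (intro emp_integrable) auto
    have "(\<integral>z. phi N ah \<rho> \<sigma> z \<partial>Q0) = (\<Sum>i<N. phi N ah \<rho> \<sigma> (z' i)) / N"
      unfolding Q0_def U_def using emp_integral[OF phi_meas fin, of z'] by simp
    also have "(\<Sum>i<N. phi N ah \<rho> \<sigma> (z' i)) = (\<Sum>i<N. lam N ah (ah i) * (\<rho> \<bullet> xh i + \<sigma>) - (lam N ah (ah i))^2 * (S / L))"
    proof (intro sum.cong refl)
      fix i
      have rr: "\<rho> \<bullet> \<rho> = r2" by (simp add: r2_def power2_norm_eq_inner)
      show "phi N ah \<rho> \<sigma> (z' i) = lam N ah (ah i) * (\<rho> \<bullet> xh i + \<sigma>) - (lam N ah (ah i))^2 * (S / L)"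
        unfolding z'_def c_def phi_alt using r2 Lpos
        by (simp add: inner_add_right inner_diff_right inner_scaleR_right rr field_simps power2_eq_square)
    qed
    also have "\<dots> = 0"
    proof -
      have "(\<Sum>i<N. lam N ah (ah i) * (\<rho> \<bullet> xh i + \<sigma>) - (lam N ah (ah i))^2 * (S / L)) = S - L * (S / L)"
        unfolding sum_subtractf sum_distrib_right[symmetric] S_def L_def ..
      then show ?thesis using Lpos by simp
    qed
    finally show "(\<integral>z. phi N ah \<rho> \<sigma> z \<partial>Q0) = 0" by simp
    fix a
    have "measure Q0 {z. fst (snd z) = a} = measure U (z' -` {z. fst (snd z) = a} \<inter> space U)"
      unfolding Q0_def by (intro measure_distr) (auto simp: U_def U_meas)
    also have "\<dots> = measure U {i\<in>{..<N}. ah i = a}"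
      by (intro arg_cong[where f="measure U"]) (auto simp: U_def z'_def space_uniform_count_measure)
    also have "\<dots> = emp_marg N ah a"
      unfolding U_def emp_marg_def by (subst measure_uniform_count_measure) auto
    finally show "measure Q0 {z. fst (snd z) = a} = emp_marg N ah a" .
  qed
  have sP: "sets (emp_dist N xh ah yh) = sets borel" by (simp add: Pdef)
  have sQ0: "sets Q0 = sets borel" by (simp add: Q0_def)
  have pi0: "\<pi>0 \<in> couplings (emp_dist N xh ah yh) Q0"
    unfolding couplings_def
  proof (intro CollectI conjI)
    show "prob_space \<pi>0" unfolding \<pi>0_def by (intro prob_space.prob_space_distr Uprob) (simp add: U_def U_meas)
    show "sets \<pi>0 = sets (emp_dist N xh ah yh \<Otimes>\<^sub>M Q0)"
      by (simp add: \<pi>0_def sets_pair_measure_cong[OF sP sQ0])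
    have m: "(\<lambda>i. (z i, z' i)) \<in> measurable U (borel \<Otimes>\<^sub>M borel)"
      unfolding U_def by (simp add: measurable_cong_sets[OF sets_uniform_count_measure_count_space refl] space_pair_measure)
    have "distr \<pi>0 (emp_dist N xh ah yh) fst = distr U (emp_dist N xh ah yh) (fst \<circ> (\<lambda>i. (z i, z' i)))"
      unfolding \<pi>0_def using m measurable_cong_sets[OF refl sP]
      by (intro distr_distr) (auto intro: measurable_fst'' measurable_fst)
    also have "\<dots> = emp_dist N xh ah yh"
      unfolding Pdef by (intro distr_cong) auto
    finally show "distr \<pi>0 (emp_dist N xh ah yh) fst = emp_dist N xh ah yh" .
    have "distr \<pi>0 Q0 snd = distr U Q0 (snd \<circ> (\<lambda>i. (z i, z' i)))"
      unfolding \<pi>0_def using m measurable_cong_sets[OF refl sQ0]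
      by (intro distr_distr) (auto intro: measurable_snd)
    also have "\<dots> = Q0"
      unfolding Q0_def by (intro distr_cong) auto
    finally show "distr \<pi>0 Q0 snd = Q0" .
  qed
  have cost0: "(\<integral>\<^sup>+ w. cost_sq \<beta> (fst w) (snd w) \<partial>\<pi>0) = ennreal (S^2 / (real N * r2 * L))"
  proof -
    have m: "(\<lambda>i. (z i, z' i)) \<in> measurable U (borel \<Otimes>\<^sub>M borel)"
      unfolding U_def by (simp add: measurable_cong_sets[OF sets_uniform_count_measure_count_space refl] space_pair_measure)
    have cm: "(\<lambda>w. cost_sq \<beta> (fst w) (snd w)) \<in> borel_measurable \<pi>0"
      unfolding \<pi>0_def using measurable_cong_sets[OF sets_distr refl] cost_meas by blast
    have "(\<integral>\<^sup>+ w. cost_sq \<beta> (fst w) (snd w) \<partial>\<pi>0) = (\<integral>\<^sup>+ i. cost_sq \<beta> (z i) (z' i) \<partial>U)"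
      unfolding \<pi>0_def by (subst nn_integral_distr[OF m]) (use cm in \<open>auto simp: \<pi>0_def\<close>)
    also have "\<dots> = (\<integral>\<^sup>+ i. ennreal ((c (ah i))^2 * r2) \<partial>U)"
    proof (intro nn_integral_cong)
      fix i
      have "norm (xh i - (xh i + c (ah i) *\<^sub>R \<rho>)) = \<bar>c (ah i)\<bar> * norm \<rho>" by simp
      then show "cost_sq \<beta> (z i) (z' i) = ennreal ((c (ah i))^2 * r2)"
        by (simp add: cost_sq_def z_def z'_def r2_def power_mult_distrib)
    qed
    also have "\<dots> = ennreal (integral\<^sup>L U (\<lambda>i. (c (ah i))^2 * r2))"
      using r2 unfolding U_def by (intro nn_integral_eq_integral U_integrable) auto
    also have "integral\<^sup>L U (\<lambda>i. (c (ah i))^2 * r2) = (\<Sum>i<N. (c (ah i))^2 * r2) / N"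
      unfolding U_def by (subst integral_uniform_count_measure) auto
    also have "(\<Sum>i<N. (c (ah i))^2 * r2) = (\<Sum>i<N. (lam N ah (ah i))^2) * (S^2 / (r2 * L^2))"
      unfolding sum_distrib_right
      by (intro sum.cong refl) (use r2 Lpos in \<open>simp add: c_def field_simps power2_eq_square\<close>)
    also have "\<dots> = S^2 / (r2 * L)"
      using r2 Lpos unfolding L_def[symmetric] by (simp add: field_simps power2_eq_square)
    finally show ?thesis using Npos by (simp add: field_simps)
  qed
  have upper: "proj_T N xh ah yh \<rho> \<sigma> \<beta> \<le> ennreal (S^2 / (real N * r2 * L))"
    unfolding proj_T_def
  proof (rule INF_lower2[OF Q0feas])
    show "Wc_sq \<beta> (emp_dist N xh ah yh) Q0 \<le> ennreal (S^2 / (real N * r2 * L))"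
      unfolding Wc_sq_def by (rule INF_lower2[OF pi0]) (simp add: cost0)
  qed
  show ?thesis using lower upper by (simp add: S_def L_def r2_def mult.assoc)
qed
end
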